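(* Let $(V_n)_{n\geq 1}$ be an eventually polynomial sequence of representations, $V_n$ a representation of $S_n$. Then there exists $N$ such that the sign representation does not occur in $V_n$ for all $n\geq N$. In particular, for every partition $\lambda$, the sign representation of $S_n$ does not occur in the restriction of $W_\lambda(\mathbb C^n)$ to $S_n$ for any $n>|\lambda|+1$.
   Context: For $i\geq1$, $X_i(\sigma)$ denotes the number of $i$-cycles of a permutation $\sigma$. A sequence $(V_n)$ with $V_n$ a representation of $S_n$ is eventually polynomial if there exist $p\in\mathbb C[X_1,X_2,\dotsc]$ and $N\geq0$ such that $p(X_1(\sigma),X_2(\sigma),\dotsc)$ equals the character of $V_n$ at $\sigma$ for all $n\geq N$ and $\sigma\in S_n$. $W_\lambda(\mathbb C^n)$ is the irreducible polynomial representation (Weyl module) of $GL_n(\mathbb C)$ indexed by $\lambda$ (zero if $\lambda$ has more than $n$ parts), and $S_n$ is embedded in $GL_n(\mathbb C)$ as permutation matrices. *)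

theory Defs
  imports "HOL-Combinatorics.Permutations" "HOL-Combinatorics.Orbits" "Jordan_Normal_Form.Matrix"
begin

text \<open>S_n is the group of permutations of {0..<n}. X_i(sigma) = number of i-cycles
  (cycles = orbits, fixed points are 1-cycles).\<close>
definition cyc_count :: "nat \<Rightarrow> (nat \<Rightarrow> nat) \<Rightarrow> nat \<Rightarrow> nat" where
  "cyc_count n \<sigma> i = card {orbit \<sigma> x | x. x < n \<and> card (orbit \<sigma> x) = i}"

text \<open>A polynomial in C[X_1,X_2,...] is a finite list of terms (c, e) standing for
  c * X_1^(e!0) * X_2^(e!1) * ... ; evaluation at the values X i (i >= 1).\<close>
type_synonym cpoly = "(complex \<times> nat list) list"

definition cpoly_eval :: "cpoly \<Rightarrow> (nat \<Rightarrow> nat) \<Rightarrow> complex" where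
  "cpoly_eval p X = (\<Sum>(c, e)\<leftarrow>p. c * (\<Prod>i<length e. of_nat (X (Suc i)) ^ (e ! i)))"

definition is_rep :: "nat \<Rightarrow> nat \<Rightarrow> ((nat \<Rightarrow> nat) \<Rightarrow> complex mat) \<Rightarrow> bool" where
  "is_rep n d \<rho> \<longleftrightarrow>
     (\<forall>\<sigma>. \<sigma> permutes {..<n} \<longrightarrow> \<rho> \<sigma> \<in> carrier_mat d d) \<and>
     \<rho> id = 1\<^sub>m d \<and>
     (\<forall>\<sigma> \<tau>. \<sigma> permutes {..<n} \<longrightarrow> \<tau> permutes {..<n} \<longrightarrow> \<rho> (\<sigma> \<circ> \<tau>) = \<rho> \<sigma> * \<rho> \<tau>)"

definition sign_occurs :: "nat \<Rightarrow> nat \<Rightarrow> ((nat \<Rightarrow> nat) \<Rightarrow> complex mat) \<Rightarrow> bool" where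
  "sign_occurs n d \<rho> \<longleftrightarrow>
     (\<exists>v \<in> carrier_vec d. v \<noteq> 0\<^sub>v d \<and>
        (\<forall>\<sigma>. \<sigma> permutes {..<n} \<longrightarrow> \<rho> \<sigma> *\<^sub>v v = of_int (sign \<sigma>) \<cdot>\<^sub>v v))"

definition mat_trace :: "complex mat \<Rightarrow> complex" where
  "mat_trace A = (\<Sum>i<dim_row A. A $$ (i, i))"

definition eventually_polynomial :: "(nat \<Rightarrow> nat) \<Rightarrow> (nat \<Rightarrow> (nat \<Rightarrow> nat) \<Rightarrow> complex mat) \<Rightarrow> bool" where
  "eventually_polynomial d \<rho> \<longleftrightarrow>
     (\<exists>p N. \<forall>n\<ge>N. \<forall>\<sigma>. \<sigma> permutes {..<n} \<longrightarrow>
        mat_trace (\<rho> n \<sigma>) = cpoly_eval p (cyc_count n \<sigma>))"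

definition is_partition :: "nat list \<Rightarrow> bool" where
  "is_partition lam \<longleftrightarrow> sorted_wrt (\<ge>) lam \<and> (\<forall>x\<in>set lam. 0 < x)"

text \<open>Canonical Young tableau of shape lam: positions 0..<|lam| filled row by row.\<close>
definition row_of :: "nat list \<Rightarrow> nat \<Rightarrow> nat" where
  "row_of lam p = (LEAST r. p < sum_list (take (Suc r) lam))"

definition col_of :: "nat list \<Rightarrow> nat \<Rightarrow> nat" where
  "col_of lam p = p - sum_list (take (row_of lam p) lam)"

definition row_group :: "nat list \<Rightarrow> (nat \<Rightarrow> nat) set" where
  "row_group lam = {\<pi>. \<pi> permutes {..<sum_list lam} \<and>
      (\<forall>p<sum_list lam. row_of lam (\<pi> p) = row_of lam p)}"

definition col_group :: "nat list \<Rightarrow> (nat \<Rightarrow> nat) set" where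
  "col_group lam = {\<pi>. \<pi> permutes {..<sum_list lam} \<and>
      (\<forall>p<sum_list lam. col_of lam (\<pi> p) = col_of lam p)}"

text \<open>Tensors in (C^n)^{\<otimes>k}: coefficient functions on words w of length k over {0..<n}
  (w = (i_0,...,i_{k-1}) stands for e_{i_0} \<otimes> ... \<otimes> e_{i_{k-1}}).\<close>
definition tensor_space :: "nat \<Rightarrow> nat \<Rightarrow> (nat list \<Rightarrow> complex) set" where
  "tensor_space n k = {T. \<forall>w. T w \<noteq> 0 \<longrightarrow> length w = k \<and> set w \<subseteq> {..<n}}"

definition pos_act :: "(nat \<Rightarrow> nat) \<Rightarrow> (nat list \<Rightarrow> complex) \<Rightarrow> (nat list \<Rightarrow> complex)" where
  "pos_act \<pi> T = (\<lambda>w. T (map (\<lambda>j. w ! \<pi> j) [0..<length w]))"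

definition young_sym :: "nat list \<Rightarrow> (nat list \<Rightarrow> complex) \<Rightarrow> (nat list \<Rightarrow> complex)" where
  "young_sym lam T = (\<lambda>w. \<Sum>q\<in>col_group lam. \<Sum>p\<in>row_group lam.
        of_int (sign q) * pos_act (q \<circ> p) T w)"

text \<open>W_lam(C^n) = c_lam (C^n)^{\<otimes>|lam|} (zero if lam has more than n parts).\<close>
definition weyl_module :: "nat list \<Rightarrow> nat \<Rightarrow> (nat list \<Rightarrow> complex) set" where
  "weyl_module lam n = young_sym lam ` tensor_space n (sum_list lam)"

text \<open>Action of sigma in S_n, viewed as the permutation matrix e_i \<mapsto> e_(sigma i) in GL_n,
  on tensors: sigma (e_w) = e_(sigma \<circ> w).\<close>
definition letter_act :: "(nat \<Rightarrow> nat) \<Rightarrow> (nat list \<Rightarrow> complex) \<Rightarrow> (nat list \<Rightarrow> complex)" where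
  "letter_act \<sigma> T = (\<lambda>ws. T (map (inv_into UNIV \<sigma>) ws))"

definition sign_occurs_in_weyl :: "nat list \<Rightarrow> nat \<Rightarrow> bool" where
  "sign_occurs_in_weyl lam n \<longleftrightarrow>
     (\<exists>v \<in> weyl_module lam n. v \<noteq> (\<lambda>_. 0) \<and>
        (\<forall>\<sigma>. \<sigma> permutes {..<n} \<longrightarrow> letter_act \<sigma> v = (\<lambda>w. of_int (sign \<sigma>) * v w)))"

end

theory Submission
  imports Defs "Jordan_Normal_Form.Schur_Decomposition"
begin


lemma perm_orbit_eq:
  fixes \<sigma> :: "nat \<Rightarrow> nat"
  assumes "\<sigma> permutes {..<n}" "y \<in> orbit \<sigma> x"
  shows "orbit \<sigma> y = orbit \<sigma> x"
proof -
  have p: "permutation \<sigma>" by (rule permutes_imp_permutation[OF finite_lessThan assms(1)])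
  have "x \<in> orbit \<sigma> y" using orbit_swap[OF permutation_self_in_orbit[OF p] assms(2)] .
  then show ?thesis using assms(2) orbit_trans[of _ \<sigma> y x] orbit_trans[of _ \<sigma> x y] by blast
qed

lemma perm_orbit_finite:
  fixes \<sigma> :: "nat \<Rightarrow> nat"
  assumes "\<sigma> permutes {..<n}"
  shows "finite (orbit \<sigma> x)"
proof -
  have p: "permutation \<sigma>" by (rule permutes_imp_permutation[OF finite_lessThan assms(1)])
  show ?thesis by (rule finite_orbit[OF permutation_self_in_orbit[OF p]])
qed

lemma card_points_cyc:
  assumes "\<sigma> permutes {..<n}"
  shows "card {x. x < n \<and> card (orbit \<sigma> x) = i} = i * cyc_count n \<sigma> i"
proof -
  let ?O = "{orbit \<sigma> x | x. x < n \<and> card (orbit \<sigma> x) = i}"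
  have U: "\<Union>?O = {x. x < n \<and> card (orbit \<sigma> x) = i}"
  proof
    show "\<Union>?O \<subseteq> {x. x < n \<and> card (orbit \<sigma> x) = i}"
    proof
      fix z assume "z \<in> \<Union>?O"
      then obtain x where x: "x < n" "card (orbit \<sigma> x) = i" "z \<in> orbit \<sigma> x" by auto
      have "z < n" using permutes_orbit_subset[OF assms, of x] x by auto
      moreover have "orbit \<sigma> z = orbit \<sigma> x" using perm_orbit_eq[OF assms x(3)] .
      ultimately show "z \<in> {x. x < n \<and> card (orbit \<sigma> x) = i}" using x by auto
    qed
  next
    show "{x. x < n \<and> card (orbit \<sigma> x) = i} \<subseteq> \<Union>?O"
    proof
      fix z assume "z \<in> {x. x < n \<and> card (orbit \<sigma> x) = i}"
      moreover have "z \<in> orbit \<sigma> z"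
        by (rule permutation_self_in_orbit, rule permutes_imp_permutation[OF _ assms]) simp
      ultimately show "z \<in> \<Union>?O" by blast
    qed
  qed
  have fin: "finite ?O"
  proof -
    have "?O = (\<lambda>x. orbit \<sigma> x) ` {x. x < n \<and> card (orbit \<sigma> x) = i}"
      by blast
    then show ?thesis by simp
  qed
  have disj: "pairwise disjnt ?O"
    unfolding pairwise_def disjnt_def
  proof (intro ballI impI)
    fix A B assume "A \<in> ?O" "B \<in> ?O" "A \<noteq> B"
    then obtain x y where xy: "A = orbit \<sigma> x" "B = orbit \<sigma> y" by blast
    show "A \<inter> B = {}"
    proof (rule ccontr)
      assume "A \<inter> B \<noteq> {}"
      then obtain z where "z \<in> orbit \<sigma> x" "z \<in> orbit \<sigma> y" using xy by blast
      then have "orbit \<sigma> x = orbit \<sigma> y" using perm_orbit_eq[OF assms, of z x] perm_orbit_eq[OF assms, of z y] by simp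
      then show False using xy \<open>A \<noteq> B\<close> by simp
    qed
  qed
  have "card (\<Union>?O) = sum card ?O"
    by (rule card_Union_disjoint[OF disj]) (auto intro: perm_orbit_finite[OF assms])
  also have "\<dots> = sum (\<lambda>_. i) ?O" by (rule sum.cong) auto
  also have "\<dots> = i * card ?O" by simp
  finally have "card (\<Union>?O) = i * card ?O" .
  from this[unfolded U] show ?thesis unfolding cyc_count_def .
qed


definition satC :: "(nat \<times> nat) list \<Rightarrow> (nat \<Rightarrow> nat) \<Rightarrow> bool" where
  "satC C \<sigma> \<longleftrightarrow> (\<forall>c\<in>set C. card (orbit \<sigma> (fst c)) = snd c)"

definition UC :: "(nat \<times> nat) list \<Rightarrow> (nat \<Rightarrow> nat) \<Rightarrow> nat set" where
  "UC C \<sigma> = (\<Union>c\<in>set C. orbit \<sigma> (fst c))"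

lemma UC_card:
  fixes \<sigma> :: "nat \<Rightarrow> nat"
  assumes "\<sigma> permutes {..<n}" "satC C \<sigma>"
  shows "finite (UC C \<sigma>) \<and> card (UC C \<sigma>) \<le> sum_list (map snd C)"
  using assms(2)
proof (induction C)
  case Nil
  then show ?case by (simp add: UC_def)
next
  case (Cons c C)
  have h: "satC C \<sigma>" "card (orbit \<sigma> (fst c)) = snd c" using Cons.prems by (auto simp: satC_def)
  have e: "UC (c # C) \<sigma> = orbit \<sigma> (fst c) \<union> UC C \<sigma>" by (simp add: UC_def)
  have f: "finite (orbit \<sigma> (fst c))" by (rule perm_orbit_finite[OF assms(1)])
  from Cons.IH[OF h(1)] have ih: "finite (UC C \<sigma>)" "card (UC C \<sigma>) \<le> sum_list (map snd C)" by auto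
  have "card (UC (c # C) \<sigma>) \<le> card (orbit \<sigma> (fst c)) + card (UC C \<sigma>)"
    unfolding e by (rule card_Un_le)
  then show ?case using e f ih h(2) by simp
qed

lemma orbit_sub_UC:
  assumes "c \<in> set C"
  shows "orbit \<sigma> (fst c) \<subseteq> UC C \<sigma>"
  using assms unfolding UC_def by blast

lemma involution_sum:
  assumes n: "sum_list (map snd C) + 2 \<le> n"
  shows "(\<Sum>\<sigma>\<in>{\<sigma>. \<sigma> permutes {..<n} \<and> satC C \<sigma>}. (of_int (sign \<sigma>) :: complex)) = 0"
proof -
  define S where "S = {\<sigma>. \<sigma> permutes {..<n} \<and> satC C \<sigma>}"
  define R where "R = (\<lambda>\<sigma>. {..<n} - UC C \<sigma>)"
  define a where "a = (\<lambda>\<sigma>. Min (R \<sigma>))"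
  define b where "b = (\<lambda>\<sigma>. Min (R \<sigma> - {a \<sigma>}))"
  define g where "g = (\<lambda>\<sigma>::nat\<Rightarrow>nat. \<sigma> \<circ> transpose (a \<sigma>) (b \<sigma>))"
  have ab: "a \<sigma> \<in> R \<sigma> \<and> b \<sigma> \<in> R \<sigma> \<and> a \<sigma> \<noteq> b \<sigma>" if "\<sigma> \<in> S" for \<sigma>
  proof -
    have p: "\<sigma> permutes {..<n}" "satC C \<sigma>" using that by (auto simp: S_def)
    from UC_card[OF p] have u: "finite (UC C \<sigma>)" "card (UC C \<sigma>) \<le> sum_list (map snd C)" by auto
    have "card {..<n} - card (UC C \<sigma>) \<le> card (R \<sigma>)"
      unfolding R_def by (rule diff_card_le_card_Diff[OF u(1)])
    then have c2: "2 \<le> card (R \<sigma>)" using u(2) n by simp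
    have fR: "finite (R \<sigma>)" by (simp add: R_def)
    have ne: "R \<sigma> \<noteq> {}" using c2 by auto
    have aR: "a \<sigma> \<in> R \<sigma>" unfolding a_def using Min_in[OF fR ne] .
    have cc: "card (R \<sigma> - {a \<sigma>}) = card (R \<sigma>) - 1" using aR fR by simp
    have "R \<sigma> - {a \<sigma>} \<noteq> {}"
    proof
      assume e: "R \<sigma> - {a \<sigma>} = {}"
      have "card (R \<sigma> - {a \<sigma>}) = 0" unfolding e by (rule card.empty)
      then show False using cc c2 by simp
    qed
    then have "b \<sigma> \<in> R \<sigma> - {a \<sigma>}" unfolding b_def by (rule Min_in[OF finite_Diff[OF fR]])
    then show ?thesis using aR by auto
  qed
  have key: "g \<sigma> \<in> S \<and> g (g \<sigma>) = \<sigma> \<and> sign (g \<sigma>) = - sign \<sigma>" if s: "\<sigma> \<in> S" for \<sigma>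
  proof -
    have p: "\<sigma> permutes {..<n}" "satC C \<sigma>" using s by (auto simp: S_def)
    have abs: "a \<sigma> \<in> R \<sigma>" "b \<sigma> \<in> R \<sigma>" "a \<sigma> \<noteq> b \<sigma>" using ab[OF s] by auto
    have t: "transpose (a \<sigma>) (b \<sigma>) permutes {..<n}"
      by (rule permutes_swap_id) (use abs in \<open>auto simp: R_def\<close>)
    have gp: "g \<sigma> permutes {..<n}" unfolding g_def by (rule permutes_compose[OF t p(1)])
    have perm: "permutation \<sigma>" by (rule permutes_imp_permutation[OF finite_lessThan p(1)])
    have orb: "orbit (g \<sigma>) (fst c) = orbit \<sigma> (fst c)" if c: "c \<in> set C" for c
    proof (rule orbit_cong)
      show "fst c \<in> orbit \<sigma> (fst c)" by (rule permutation_self_in_orbit[OF perm])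
    next
      fix y assume y: "y \<in> orbit \<sigma> (fst c)"
      then have "y \<in> UC C \<sigma>" using orbit_sub_UC[OF c] by blast
      then have "y \<noteq> a \<sigma>" "y \<noteq> b \<sigma>" using abs by (auto simp: R_def)
      then show "g \<sigma> y = \<sigma> y" by (simp add: g_def)
    qed
    have sat: "satC C (g \<sigma>)" using p(2) orb by (simp add: satC_def)
    have U: "UC C (g \<sigma>) = UC C \<sigma>" unfolding UC_def using orb by simp
    have "R (g \<sigma>) = R \<sigma>" unfolding R_def U ..
    then have "a (g \<sigma>) = a \<sigma>" "b (g \<sigma>) = b \<sigma>" unfolding a_def b_def by simp_all
    then have gg: "g (g \<sigma>) = \<sigma>" unfolding g_def by (simp add: comp_assoc)
    have tp: "permutation (transpose (a \<sigma>) (b \<sigma>))" by (rule permutes_imp_permutation[OF finite_lessThan t])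
    have "sign (g \<sigma>) = sign \<sigma> * sign (transpose (a \<sigma>) (b \<sigma>))"
      unfolding g_def by (rule sign_compose[OF perm tp])
    also have "\<dots> = - sign \<sigma>" using abs(3) by (simp add: sign_swap_id)
    finally show ?thesis using gp sat gg by (simp add: S_def)
  qed
  have "(\<Sum>\<sigma>\<in>S. (of_int (sign (g \<sigma>)) :: complex)) = (\<Sum>\<sigma>\<in>S. of_int (sign \<sigma>))"
    by (rule sum.reindex_bij_witness[where i=g and j=g]) (simp_all add: key)
  moreover have "(\<Sum>\<sigma>\<in>S. (of_int (sign (g \<sigma>)) :: complex)) = (\<Sum>\<sigma>\<in>S. - of_int (sign \<sigma>))"
    by (rule sum.cong) (simp_all add: key)
  moreover have "(\<Sum>\<sigma>\<in>S. - (of_int (sign \<sigma>) :: complex)) = - (\<Sum>\<sigma>\<in>S. of_int (sign \<sigma>))"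
    by (rule sum_negf)
  ultimately have "(\<Sum>\<sigma>\<in>S. (of_int (sign \<sigma>) :: complex)) = 0" by simp
  then show ?thesis by (simp add: S_def)
qed


lemma card_filter_sum:
  fixes n :: nat
  shows "(of_nat (card {x. x < n \<and> P x}) :: complex) = (\<Sum>x<n. if P x then 1 else 0)"
proof -
  have e: "{x. x < n \<and> P x} = {x\<in>{..<n}. P x}" by auto
  have "(\<Sum>x<n. if P x then (1::complex) else 0) = (\<Sum>x\<in>{x\<in>{..<n}. P x}. 1)"
    by (rule sum.inter_filter[symmetric]) simp
  also have "\<dots> = of_nat (card {x\<in>{..<n}. P x})" by simp
  finally show ?thesis unfolding e by simp
qed

definition Ycnt :: "nat \<Rightarrow> (nat \<Rightarrow> nat) \<Rightarrow> nat \<Rightarrow> complex" where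
  "Ycnt n \<sigma> l = of_nat (card {x. x < n \<and> card (orbit \<sigma> x) = l})"

lemma ind_sum:
  assumes "sum_list (map snd C) + sum_list ls + 2 \<le> n"
  shows "(\<Sum>\<sigma>\<in>{\<sigma>. \<sigma> permutes {..<n}}. of_int (sign \<sigma>) * of_bool (satC C \<sigma>) *
            prod_list (map (Ycnt n \<sigma>) ls)) = (0::complex)"
  using assms
proof (induction ls arbitrary: C)
  case Nil
  have fin: "finite {\<sigma>. \<sigma> permutes {..<n}}" by (rule finite_permutations) simp
  have "(\<Sum>\<sigma>\<in>{\<sigma>. \<sigma> permutes {..<n}}. of_int (sign \<sigma>) * of_bool (satC C \<sigma>) *
            prod_list (map (Ycnt n \<sigma>) [])) =
        (\<Sum>\<sigma>\<in>{\<sigma>. \<sigma> permutes {..<n}}. if satC C \<sigma> then (of_int (sign \<sigma>) :: complex) else 0)"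
    by (rule sum.cong) auto
  also have "\<dots> = (\<Sum>\<sigma>\<in>{\<sigma> \<in> {\<sigma>. \<sigma> permutes {..<n}}. satC C \<sigma>}. of_int (sign \<sigma>))"
    by (rule sum.inter_filter[symmetric, OF fin])
  also have "{\<sigma> \<in> {\<sigma>. \<sigma> permutes {..<n}}. satC C \<sigma>} = {\<sigma>. \<sigma> permutes {..<n} \<and> satC C \<sigma>}" by simp
  also have "(\<Sum>\<sigma>\<in>{\<sigma>. \<sigma> permutes {..<n} \<and> satC C \<sigma>}. (of_int (sign \<sigma>) :: complex)) = 0"
    by (rule involution_sum) (use Nil in simp)
  finally show ?case .
next
  case (Cons l ls)
  let ?P = "{\<sigma>. \<sigma> permutes {..<n}}"
  have "(\<Sum>\<sigma>\<in>?P. of_int (sign \<sigma>) * of_bool (satC C \<sigma>) * prod_list (map (Ycnt n \<sigma>) (l # ls))) =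
        (\<Sum>\<sigma>\<in>?P. \<Sum>x<n. of_int (sign \<sigma>) * of_bool (satC ((x, l) # C) \<sigma>) * prod_list (map (Ycnt n \<sigma>) ls))"
  proof (rule sum.cong[OF refl])
    fix \<sigma>
    have "of_int (sign \<sigma>) * of_bool (satC C \<sigma>) * prod_list (map (Ycnt n \<sigma>) (l # ls)) =
          (\<Sum>x<n. of_int (sign \<sigma>) * of_bool (satC C \<sigma>) * (if card (orbit \<sigma> x) = l then 1 else 0) * prod_list (map (Ycnt n \<sigma>) ls))"
      by (simp add: Ycnt_def card_filter_sum sum_distrib_left sum_distrib_right mult.assoc)
    also have "\<dots> = (\<Sum>x<n. of_int (sign \<sigma>) * of_bool (satC ((x, l) # C) \<sigma>) * prod_list (map (Ycnt n \<sigma>) ls))"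
      by (rule sum.cong[OF refl]) (simp add: satC_def)
    finally show "of_int (sign \<sigma>) * of_bool (satC C \<sigma>) * prod_list (map (Ycnt n \<sigma>) (l # ls)) =
          (\<Sum>x<n. of_int (sign \<sigma>) * of_bool (satC ((x, l) # C) \<sigma>) * prod_list (map (Ycnt n \<sigma>) ls))" .
  qed
  also have "\<dots> = (\<Sum>x<n. \<Sum>\<sigma>\<in>?P. of_int (sign \<sigma>) * of_bool (satC ((x, l) # C) \<sigma>) * prod_list (map (Ycnt n \<sigma>) ls))"
    by (rule sum.swap)
  also have "\<dots> = (\<Sum>x<n. (0::complex))"
  proof (rule sum.cong[OF refl])
    fix x
    show "(\<Sum>\<sigma>\<in>?P. of_int (sign \<sigma>) * of_bool (satC ((x, l) # C) \<sigma>) * prod_list (map (Ycnt n \<sigma>) ls)) = 0"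
      by (rule Cons.IH) (use Cons.prems in simp)
  qed
  finally show ?case by simp
qed


lemma prod_list_map_concat:
  "prod_list (map f (concat xss)) = prod_list (map (\<lambda>xs. prod_list (map f xs)) xss)"
  by (induction xss) auto

lemma prod_list_map_replicate:
  "prod_list (map f (replicate k a)) = f a ^ k"
  by (induction k) auto

lemma prod_list_map_upt0:
  "prod_list (map g [0..<L]) = (\<Prod>i<L. g i)"
  by (induction L) (auto simp: lessThan_Suc mult.commute)

definition lsE :: "nat list \<Rightarrow> nat list" where
  "lsE e = concat (map (\<lambda>i. replicate (e ! i) (Suc i)) [0..<length e])"

definition monX :: "nat list \<Rightarrow> (nat \<Rightarrow> nat) \<Rightarrow> complex" where
  "monX e X = (\<Prod>i<length e. of_nat (X (Suc i)) ^ (e ! i))"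

definition KE :: "nat list \<Rightarrow> complex" where
  "KE e = (\<Prod>i<length e. of_nat (Suc i) ^ (e ! i))"

lemma KE_nz: "KE e \<noteq> 0"
  unfolding KE_def by (subst prod_zero_iff) (simp_all del: of_nat_Suc)

lemma prod_Y_mon:
  assumes "\<sigma> permutes {..<n}"
  shows "prod_list (map (Ycnt n \<sigma>) (lsE e)) = KE e * monX e (cyc_count n \<sigma>)"
proof -
  have Y: "Ycnt n \<sigma> (Suc i) = of_nat (Suc i) * of_nat (cyc_count n \<sigma> (Suc i))" for i
    unfolding Ycnt_def card_points_cyc[OF assms] by (simp add: algebra_simps)
  have "prod_list (map (Ycnt n \<sigma>) (lsE e)) = (\<Prod>i<length e. Ycnt n \<sigma> (Suc i) ^ (e ! i))"
    unfolding lsE_def prod_list_map_concat by (simp add: prod_list_map_replicate o_def prod_list_map_upt0)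
  also have "\<dots> = (\<Prod>i<length e. of_nat (Suc i) ^ (e ! i) * of_nat (cyc_count n \<sigma> (Suc i)) ^ (e ! i))"
    unfolding Y power_mult_distrib ..
  also have "\<dots> = KE e * monX e (cyc_count n \<sigma>)"
    unfolding KE_def monX_def by (rule prod.distrib)
  finally show ?thesis .
qed

lemma mon_sum_zero:
  fixes n :: nat
  assumes "sum_list (lsE e) + 2 \<le> n"
  shows "(\<Sum>\<sigma>\<in>{\<sigma>. \<sigma> permutes {..<n}}. of_int (sign \<sigma>) * monX e (cyc_count n \<sigma>)) = 0"
proof -
  have "(\<Sum>\<sigma>\<in>{\<sigma>. \<sigma> permutes {..<n}}. of_int (sign \<sigma>) * of_bool (satC [] \<sigma>) *
            prod_list (map (Ycnt n \<sigma>) (lsE e))) = (0::complex)"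
    by (rule ind_sum) (use assms in simp)
  moreover have "(\<Sum>\<sigma>\<in>{\<sigma>. \<sigma> permutes {..<n}}. of_int (sign \<sigma>) * of_bool (satC [] \<sigma>) *
            prod_list (map (Ycnt n \<sigma>) (lsE e))) =
       (\<Sum>\<sigma>\<in>{\<sigma>. \<sigma> permutes {..<n}}. KE e * (of_int (sign \<sigma>) * monX e (cyc_count n \<sigma>)))"
    by (rule sum.cong[OF refl]) (simp add: satC_def prod_Y_mon)
  moreover have "\<dots> = KE e * (\<Sum>\<sigma>\<in>{\<sigma>. \<sigma> permutes {..<n}}. of_int (sign \<sigma>) * monX e (cyc_count n \<sigma>))"
    by (rule sum_distrib_left[symmetric])
  ultimately show ?thesis using KE_nz[of e] by simp
qed

definition WP :: "cpoly \<Rightarrow> nat" where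
  "WP p = sum_list (map (\<lambda>t. sum_list (lsE (snd t))) p)"

lemma cpoly_sum_zero:
  fixes n :: nat
  assumes "WP p + 2 \<le> n"
  shows "(\<Sum>\<sigma>\<in>{\<sigma>. \<sigma> permutes {..<n}}. of_int (sign \<sigma>) * cpoly_eval p (cyc_count n \<sigma>)) = 0"
  using assms
proof (induction p)
  case Nil
  then show ?case by (simp add: cpoly_eval_def)
next
  case (Cons t p)
  obtain c e where t: "t = (c, e)" by (cases t)
  have ev: "cpoly_eval (t # p) X = c * monX e X + cpoly_eval p X" for X
    unfolding cpoly_eval_def monX_def t by simp
  have w: "WP (t # p) = sum_list (lsE e) + WP p" unfolding WP_def t by simp
  have "(\<Sum>\<sigma>\<in>{\<sigma>. \<sigma> permutes {..<n}}. of_int (sign \<sigma>) * cpoly_eval (t # p) (cyc_count n \<sigma>)) =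
        c * (\<Sum>\<sigma>\<in>{\<sigma>. \<sigma> permutes {..<n}}. of_int (sign \<sigma>) * monX e (cyc_count n \<sigma>)) +
        (\<Sum>\<sigma>\<in>{\<sigma>. \<sigma> permutes {..<n}}. of_int (sign \<sigma>) * cpoly_eval p (cyc_count n \<sigma>))"
    unfolding ev by (simp add: sum.distrib sum_distrib_left algebra_simps)
  also have "\<dots> = 0"
    using mon_sum_zero[of e n] Cons.IH Cons.prems w by simp
  finally show ?case .
qed



lemma mat_trace_comm:
  fixes X Y :: "complex mat"
  assumes "X \<in> carrier_mat d d" "Y \<in> carrier_mat d d"
  shows "mat_trace (X * Y) = mat_trace (Y * X)"
proof -
  have "mat_trace (X * Y) = (\<Sum>i<d. \<Sum>k<d. X $$ (i, k) * Y $$ (k, i))"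
    unfolding mat_trace_def using assms
    by (intro sum.cong) (auto simp: scalar_prod_def lessThan_atLeast0)
  also have "\<dots> = (\<Sum>k<d. \<Sum>i<d. Y $$ (k, i) * X $$ (i, k))"
    by (subst sum.swap) (simp add: mult.commute)
  also have "\<dots> = mat_trace (Y * X)"
    unfolding mat_trace_def using assms
    by (intro sum.cong) (auto simp: scalar_prod_def lessThan_atLeast0)
  finally show ?thesis .
qed

lemma sum_list_map_upt0:
  "sum_list (map g [0..<L]) = (\<Sum>i<L. g i)"
  by (induction L) (auto simp: lessThan_Suc add.commute)

lemma sum_list_two_vals:
  assumes "\<forall>a\<in>set es. a = 0 \<or> a = c"
  shows "sum_list es = of_nat (length (filter (\<lambda>a. a = c) es)) * (c :: complex)"
  using assms by (induction es) (auto simp: algebra_simps)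

lemma eig_two_vals:
  fixes A :: "complex mat"
  assumes A: "A \<in> carrier_mat d d"
    and sq: "\<And>i j. i < d \<Longrightarrow> j < d \<Longrightarrow> (A * A) $$ (i, j) = c * A $$ (i, j)"
    and ev: "eigenvalue A a"
  shows "a = 0 \<or> a = c"
proof -
  from ev obtain w where w: "w \<in> carrier_vec d" "w \<noteq> 0\<^sub>v d" "A *\<^sub>v w = a \<cdot>\<^sub>v w"
    unfolding eigenvalue_def eigenvector_def using A by auto
  obtain i where i: "i < d" "w $ i \<noteq> 0"
  proof (rule ccontr)
    assume "\<not> thesis"
    then have "\<forall>i<d. w $ i = 0" using that by blast
    then have "w = 0\<^sub>v d" using w(1) by (intro eq_vecI) auto
    then show False using w(2) by simp
  qed
  have "(A * A *\<^sub>v w) $ i = (A *\<^sub>v (A *\<^sub>v w)) $ i" using A w(1) by simp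
  also have "\<dots> = (A *\<^sub>v (a \<cdot>\<^sub>v w)) $ i" using w(3) by simp
  also have "\<dots> = (a \<cdot>\<^sub>v (A *\<^sub>v w)) $ i" using mult_mat_vec[OF A w(1)] by simp
  also have "\<dots> = a * a * w $ i" using w(3) i A carrier_vecD[OF w(1)] by simp
  finally have l: "(A * A *\<^sub>v w) $ i = a * a * w $ i" .
  have "(A * A *\<^sub>v w) $ i = (\<Sum>j<d. (A * A) $$ (i, j) * w $ j)"
    using A w(1) i by (simp add: scalar_prod_def lessThan_atLeast0 del: assoc_mult_mat_vec)
  also have "\<dots> = (\<Sum>j<d. c * (A $$ (i, j) * w $ j))"
    using sq i by (intro sum.cong) auto
  also have "\<dots> = c * (A *\<^sub>v w) $ i"
    using A w(1) i by (simp add: scalar_prod_def lessThan_atLeast0 sum_distrib_left)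
  also have "\<dots> = c * a * w $ i" using w(3) i A carrier_vecD[OF w(1)] by simp
  finally have "a * a * w $ i = c * a * w $ i" using l by simp
  then have "a * a = c * a" using i(2) by simp
  then show ?thesis by (metis mult_cancel_right mult_eq_0_iff)
qed

lemma trace_nonzero:
  fixes A :: "complex mat" and c :: complex
  assumes A: "A \<in> carrier_mat d d"
    and sq: "\<And>i j. i < d \<Longrightarrow> j < d \<Longrightarrow> (A * A) $$ (i, j) = c * A $$ (i, j)"
    and c: "c \<noteq> 0"
    and v: "v \<in> carrier_vec d" "v \<noteq> 0\<^sub>v d" "A *\<^sub>v v = c \<cdot>\<^sub>v v"
  shows "mat_trace A \<noteq> 0"
proof -
  obtain es where es: "char_poly A = (\<Prod>a\<leftarrow>es. [:- a, 1:])"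
    using char_poly_factorized[OF A] by auto
  obtain B P Q where bpq: "schur_decomposition A es = (B, P, Q)"
    by (cases "schur_decomposition A es") auto
  from schur_decomposition[OF A es bpq]
  have sim: "similar_mat_wit A B P Q" and diag: "diag_mat B = es" by auto
  from sim A have car: "B \<in> carrier_mat d d" "P \<in> carrier_mat d d" "Q \<in> carrier_mat d d"
    and PQ: "Q * P = 1\<^sub>m d" and AB: "A = P * B * Q"
    unfolding similar_mat_wit_def Let_def by auto
  have "mat_trace A = mat_trace ((P * B) * Q)" using AB by simp
  also have "\<dots> = mat_trace (Q * (P * B))"
    by (rule mat_trace_comm) (use car in auto)
  also have "Q * (P * B) = (Q * P) * B" using car by simp
  also have "\<dots> = B" using PQ car by simp
  finally have tr: "mat_trace A = mat_trace B" .
  have "mat_trace B = sum_list (diag_mat B)"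
    unfolding mat_trace_def diag_mat_def sum_list_map_upt0 ..
  then have trB: "mat_trace A = sum_list es" using tr diag by simp
  have root: "poly (char_poly A) x = 0 \<longleftrightarrow> x \<in> set es" for x
    unfolding es poly_prod_list by (induction es) auto
  have vals: "\<forall>a\<in>set es. a = 0 \<or> a = c"
  proof
    fix a assume "a \<in> set es"
    then have "eigenvalue A a" using root eigenvalue_root_char_poly[OF A] by simp
    then show "a = 0 \<or> a = c" using eig_two_vals[OF A sq, of a] by blast
  qed
  have "eigenvalue A c" unfolding eigenvalue_def eigenvector_def using v A by auto
  then have cin: "c \<in> set es" using root eigenvalue_root_char_poly[OF A] by simp
  have "length (filter (\<lambda>a. a = c) es) \<noteq> 0" using cin by (simp add: filter_empty_conv)
  then show ?thesis using trB sum_list_two_vals[OF vals] c by simp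
qed



definition Pmat :: "nat \<Rightarrow> nat \<Rightarrow> ((nat \<Rightarrow> nat) \<Rightarrow> complex mat) \<Rightarrow> complex mat" where
  "Pmat n d \<rho> = mat d d (\<lambda>(i, j). \<Sum>\<sigma>\<in>{\<sigma>. \<sigma> permutes {..<n}}. of_int (sign \<sigma>) * \<rho> \<sigma> $$ (i, j))"

lemma Pmat_carrier: "Pmat n d \<rho> \<in> carrier_mat d d"
  unfolding Pmat_def by simp

lemma Pmat_index: "i < d \<Longrightarrow> j < d \<Longrightarrow>
  Pmat n d \<rho> $$ (i, j) = (\<Sum>\<sigma>\<in>{\<sigma>. \<sigma> permutes {..<n}}. of_int (sign \<sigma>) * \<rho> \<sigma> $$ (i, j))"
  unfolding Pmat_def by simp

lemma Pmat_trace: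
  assumes rep: "is_rep n d \<rho>"
  shows "mat_trace (Pmat n d \<rho>) = (\<Sum>\<sigma>\<in>{\<sigma>. \<sigma> permutes {..<n}}. of_int (sign \<sigma>) * mat_trace (\<rho> \<sigma>))"
proof -
  have car: "\<rho> \<sigma> \<in> carrier_mat d d" if "\<sigma> \<in> {\<sigma>. \<sigma> permutes {..<n}}" for \<sigma>
    using rep that unfolding is_rep_def by auto
  have "mat_trace (Pmat n d \<rho>) = (\<Sum>i<d. \<Sum>\<sigma>\<in>{\<sigma>. \<sigma> permutes {..<n}}. of_int (sign \<sigma>) * \<rho> \<sigma> $$ (i, i))"
    unfolding mat_trace_def using Pmat_carrier[of n d \<rho>] by (intro sum.cong) (auto simp: Pmat_index)
  also have "\<dots> = (\<Sum>\<sigma>\<in>{\<sigma>. \<sigma> permutes {..<n}}. \<Sum>i<d. of_int (sign \<sigma>) * \<rho> \<sigma> $$ (i, i))"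
    by (rule sum.swap)
  also have "\<dots> = (\<Sum>\<sigma>\<in>{\<sigma>. \<sigma> permutes {..<n}}. of_int (sign \<sigma>) * mat_trace (\<rho> \<sigma>))"
  proof (rule sum.cong[OF refl])
    fix \<sigma> assume "\<sigma> \<in> {\<sigma>. \<sigma> permutes {..<n}}"
    then have "dim_row (\<rho> \<sigma>) = d" using car by auto
    then show "(\<Sum>i<d. of_int (sign \<sigma>) * \<rho> \<sigma> $$ (i, i)) = of_int (sign \<sigma>) * mat_trace (\<rho> \<sigma>)"
      unfolding mat_trace_def by (simp add: sum_distrib_left)
  qed
  finally show ?thesis .
qed

lemma sign_sq: "of_int (sign \<sigma>) * of_int (sign \<sigma>) = (1::complex)"
  by (simp add: sign_def)

lemma Pmat_sq:
  assumes rep: "is_rep n d \<rho>" and ij: "i < d" "j < d"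
  shows "(Pmat n d \<rho> * Pmat n d \<rho>) $$ (i, j) = of_nat (fact n) * Pmat n d \<rho> $$ (i, j)"
proof -
  let ?S = "{\<sigma>. \<sigma> permutes {..<n}}"
  let ?f = "\<lambda>\<sigma> k l. (of_int (sign \<sigma>) :: complex) * \<rho> \<sigma> $$ (k, l)"
  have car: "\<rho> \<sigma> \<in> carrier_mat d d" if "\<sigma> \<in> ?S" for \<sigma>
    using rep that unfolding is_rep_def by auto
  have mul: "\<rho> (\<sigma> \<circ> \<tau>) = \<rho> \<sigma> * \<rho> \<tau>" if "\<sigma> \<in> ?S" "\<tau> \<in> ?S" for \<sigma> \<tau>
    using rep that unfolding is_rep_def by auto
  have "(Pmat n d \<rho> * Pmat n d \<rho>) $$ (i, j) = (\<Sum>k<d. Pmat n d \<rho> $$ (i, k) * Pmat n d \<rho> $$ (k, j))"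
    using Pmat_carrier[of n d \<rho>] ij by (simp add: scalar_prod_def lessThan_atLeast0)
  also have "\<dots> = (\<Sum>k<d. (\<Sum>\<sigma>\<in>?S. ?f \<sigma> i k) * (\<Sum>\<tau>\<in>?S. ?f \<tau> k j))"
    using ij by (intro sum.cong) (auto simp: Pmat_index)
  also have "\<dots> = (\<Sum>k<d. \<Sum>\<sigma>\<in>?S. \<Sum>\<tau>\<in>?S. ?f \<sigma> i k * ?f \<tau> k j)"
    by (simp add: sum_product)
  also have "\<dots> = (\<Sum>\<sigma>\<in>?S. \<Sum>k<d. \<Sum>\<tau>\<in>?S. ?f \<sigma> i k * ?f \<tau> k j)"
    by (rule sum.swap)
  also have "\<dots> = (\<Sum>\<sigma>\<in>?S. \<Sum>\<tau>\<in>?S. \<Sum>k<d. ?f \<sigma> i k * ?f \<tau> k j)"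
    by (rule sum.cong[OF refl]) (rule sum.swap)
  also have "\<dots> = (\<Sum>\<sigma>\<in>?S. \<Sum>\<tau>\<in>?S. ?f (\<sigma> \<circ> \<tau>) i j)"
  proof (intro sum.cong[OF refl])
    fix \<sigma> \<tau> assume s: "\<sigma> \<in> ?S" and t: "\<tau> \<in> ?S"
    have ps: "permutation \<sigma>" "permutation \<tau>"
      using s t permutes_imp_permutation[OF finite_lessThan] by auto
    have "(\<rho> \<sigma> * \<rho> \<tau>) $$ (i, j) = (\<Sum>k<d. \<rho> \<sigma> $$ (i, k) * \<rho> \<tau> $$ (k, j))"
      using car[OF s] car[OF t] ij by (simp add: scalar_prod_def lessThan_atLeast0)
    then show "(\<Sum>k<d. ?f \<sigma> i k * ?f \<tau> k j) = ?f (\<sigma> \<circ> \<tau>) i j"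
      unfolding mul[OF s t] sign_compose[OF ps]
      by (simp add: sum_distrib_left algebra_simps)
  qed
  also have "\<dots> = (\<Sum>\<sigma>\<in>?S. \<Sum>\<mu>\<in>?S. ?f \<mu> i j)"
  proof (rule sum.cong[OF refl])
    fix \<sigma> assume "\<sigma> \<in> ?S"
    then have "\<sigma> permutes {..<n}" by simp
    then show "(\<Sum>\<tau>\<in>?S. ?f (\<sigma> \<circ> \<tau>) i j) = (\<Sum>\<mu>\<in>?S. ?f \<mu> i j)"
      by (rule setum_permutations_compose_left[symmetric])
  qed
  also have "\<dots> = of_nat (card ?S) * Pmat n d \<rho> $$ (i, j)"
    using ij by (simp add: Pmat_index)
  also have "card ?S = fact n" by (rule card_permutations) simp_all
  finally show ?thesis .
qed

lemma Pmat_vec: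
  assumes rep: "is_rep n d \<rho>" and v: "v \<in> carrier_vec d"
    and eq: "\<And>\<sigma>. \<sigma> permutes {..<n} \<Longrightarrow> \<rho> \<sigma> *\<^sub>v v = of_int (sign \<sigma>) \<cdot>\<^sub>v v"
  shows "Pmat n d \<rho> *\<^sub>v v = of_nat (fact n) \<cdot>\<^sub>v v"
proof (rule eq_vecI)
  let ?S = "{\<sigma>. \<sigma> permutes {..<n}}"
  have car: "\<rho> \<sigma> \<in> carrier_mat d d" if "\<sigma> \<in> ?S" for \<sigma>
    using rep that unfolding is_rep_def by auto
  show "dim_vec (Pmat n d \<rho> *\<^sub>v v) = dim_vec (of_nat (fact n) \<cdot>\<^sub>v v)"
    using v Pmat_carrier[of n d \<rho>] by simp
  fix i assume "i < dim_vec (of_nat (fact n) \<cdot>\<^sub>v v)"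
  then have i: "i < d" using v by simp
  have "(Pmat n d \<rho> *\<^sub>v v) $ i = (\<Sum>j<d. Pmat n d \<rho> $$ (i, j) * v $ j)"
    using Pmat_carrier[of n d \<rho>] i v by (simp add: scalar_prod_def lessThan_atLeast0)
  also have "\<dots> = (\<Sum>j<d. \<Sum>\<sigma>\<in>?S. of_int (sign \<sigma>) * (\<rho> \<sigma> $$ (i, j) * v $ j))"
    using i by (intro sum.cong) (auto simp: Pmat_index sum_distrib_right mult.assoc)
  also have "\<dots> = (\<Sum>\<sigma>\<in>?S. \<Sum>j<d. of_int (sign \<sigma>) * (\<rho> \<sigma> $$ (i, j) * v $ j))"
    by (rule sum.swap)
  also have "\<dots> = (\<Sum>\<sigma>\<in>?S. v $ i)"
  proof (rule sum.cong[OF refl])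
    fix \<sigma> assume s: "\<sigma> \<in> ?S"
    have "(\<rho> \<sigma> *\<^sub>v v) $ i = (\<Sum>j<d. \<rho> \<sigma> $$ (i, j) * v $ j)"
      using car[OF s] i v by (simp add: scalar_prod_def lessThan_atLeast0)
    moreover have "(\<rho> \<sigma> *\<^sub>v v) $ i = of_int (sign \<sigma>) * v $ i"
      using eq[of \<sigma>] s i v by simp
    ultimately have h: "(\<Sum>j<d. \<rho> \<sigma> $$ (i, j) * v $ j) = of_int (sign \<sigma>) * v $ i" by simp
    have "(\<Sum>j<d. of_int (sign \<sigma>) * (\<rho> \<sigma> $$ (i, j) * v $ j)) =
          of_int (sign \<sigma>) * (\<Sum>j<d. \<rho> \<sigma> $$ (i, j) * v $ j)"
      by (rule sum_distrib_left[symmetric])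
    also have "\<dots> = (of_int (sign \<sigma>) * of_int (sign \<sigma>)) * v $ i" unfolding h by (simp only: mult.assoc)
    also have "\<dots> = v $ i" unfolding sign_sq by simp
    finally show "(\<Sum>j<d. of_int (sign \<sigma>) * (\<rho> \<sigma> $$ (i, j) * v $ j)) = v $ i" .
  qed
  also have "\<dots> = of_nat (fact n) * v $ i"
    by (simp add: card_permutations)
  also have "\<dots> = (of_nat (fact n) \<cdot>\<^sub>v v) $ i" using i v by simp
  finally show "(Pmat n d \<rho> *\<^sub>v v) $ i = (of_nat (fact n) \<cdot>\<^sub>v v) $ i" .
qed

lemma no_sign_large:
  assumes rep: "is_rep n d \<rho>"
    and poly: "\<And>\<sigma>. \<sigma> permutes {..<n} \<Longrightarrow> mat_trace (\<rho> \<sigma>) = cpoly_eval p (cyc_count n \<sigma>)"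
    and n: "WP p + 2 \<le> n"
  shows "\<not> sign_occurs n d \<rho>"
proof
  assume "sign_occurs n d \<rho>"
  then obtain v where v: "v \<in> carrier_vec d" "v \<noteq> 0\<^sub>v d"
    and eq: "\<And>\<sigma>. \<sigma> permutes {..<n} \<Longrightarrow> \<rho> \<sigma> *\<^sub>v v = of_int (sign \<sigma>) \<cdot>\<^sub>v v"
    unfolding sign_occurs_def by blast
  have "mat_trace (Pmat n d \<rho>) \<noteq> 0"
  proof (rule trace_nonzero[OF Pmat_carrier])
    show "(Pmat n d \<rho> * Pmat n d \<rho>) $$ (i, j) = of_nat (fact n) * Pmat n d \<rho> $$ (i, j)"
      if "i < d" "j < d" for i j using Pmat_sq[OF rep that] .
    show "(of_nat (fact n) :: complex) \<noteq> 0" by simp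
    show "v \<in> carrier_vec d" "v \<noteq> 0\<^sub>v d" by (fact v)+
    show "Pmat n d \<rho> *\<^sub>v v = of_nat (fact n) \<cdot>\<^sub>v v" by (rule Pmat_vec[OF rep v(1) eq])
  qed
  moreover have "mat_trace (Pmat n d \<rho>) = 0"
  proof -
    have "mat_trace (Pmat n d \<rho>) = (\<Sum>\<sigma>\<in>{\<sigma>. \<sigma> permutes {..<n}}. of_int (sign \<sigma>) * mat_trace (\<rho> \<sigma>))"
      by (rule Pmat_trace[OF rep])
    also have "\<dots> = (\<Sum>\<sigma>\<in>{\<sigma>. \<sigma> permutes {..<n}}. of_int (sign \<sigma>) * cpoly_eval p (cyc_count n \<sigma>))"
      by (rule sum.cong[OF refl]) (simp add: poly)
    also have "\<dots> = 0" by (rule cpoly_sum_zero[OF n])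
    finally show ?thesis .
  qed
  ultimately show False by simp
qed



lemma young_sym_len:
  assumes T: "T \<in> tensor_space n k" and w: "length w \<noteq> k"
  shows "young_sym lam T w = 0"
proof -
  have "pos_act \<pi> T w = 0" for \<pi>
  proof -
    have "length (map (\<lambda>j. w ! \<pi> j) [0..<length w]) = length w" by simp
    then show ?thesis using T w unfolding pos_act_def tensor_space_def by auto
  qed
  then show ?thesis unfolding young_sym_def by simp
qed

lemma weyl_part:
  assumes n: "n > sum_list lam + 1"
  shows "\<not> sign_occurs_in_weyl lam n"
proof
  let ?k = "sum_list lam"
  assume "sign_occurs_in_weyl lam n"
  then obtain v where vW: "v \<in> weyl_module lam n" and vnz: "v \<noteq> (\<lambda>_. 0)"
    and eq: "\<And>\<sigma>. \<sigma> permutes {..<n} \<Longrightarrow> letter_act \<sigma> v = (\<lambda>w. of_int (sign \<sigma>) * v w)"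
    unfolding sign_occurs_in_weyl_def by blast
  from vW obtain T where T: "T \<in> tensor_space n ?k" and vT: "v = young_sym lam T"
    unfolding weyl_module_def by blast
  have "v w = 0" for w
  proof (cases "length w = ?k")
    case False
    then show ?thesis using young_sym_len[OF T False] vT by simp
  next
    case True
    define R where "R = {..<n} - set w"
    have "card {..<n} - card (set w) \<le> card R"
      unfolding R_def by (rule diff_card_le_card_Diff) simp
    moreover have "card (set w) \<le> ?k" using card_length[of w] True by simp
    ultimately have c2: "2 \<le> card R" using n by simp
    have fR: "finite R" by (simp add: R_def)
    have "R \<noteq> {}" using c2 by auto
    then obtain a where a: "a \<in> R" by blast
    have cc: "card (R - {a}) = card R - 1" using a fR by simp
    have "R - {a} \<noteq> {}"
    proof
      assume e: "R - {a} = {}"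
      have "card (R - {a}) = 0" unfolding e by (rule card.empty)
      then show False using cc c2 by simp
    qed
    then obtain b where b: "b \<in> R" "b \<noteq> a" by blast
    have abn: "a < n" "b < n" "a \<notin> set w" "b \<notin> set w" using a b by (auto simp: R_def)
    have t: "transpose a b permutes {..<n}" by (rule permutes_swap_id) (use abn in auto)
    have "letter_act (transpose a b) v w = of_int (sign (transpose a b)) * v w"
      using eq[OF t] by (simp add: fun_eq_iff)
    moreover have "letter_act (transpose a b) v w = v w"
    proof -
      have "map (inv_into UNIV (transpose a b)) w = map (transpose a b) w" by simp
      also have "\<dots> = w"
      proof (rule map_idI)
        fix x assume "x \<in> set w"
        then have "x \<noteq> a" "x \<noteq> b" using abn by auto
        then show "transpose a b x = x" by simp
      qed
      finally show ?thesis unfolding letter_act_def by simp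
    qed
    moreover have "sign (transpose a b) = -1" using b(2) by (simp add: sign_swap_id)
    ultimately have "v w = - v w" by simp
    then show ?thesis by simp
  qed
  then have "v = (\<lambda>_. 0)" by (simp add: fun_eq_iff)
  then show False using vnz by simp
qed

theorem corollary2p6:
  shows "(\<forall>(d :: nat \<Rightarrow> nat) (\<rho> :: nat \<Rightarrow> (nat \<Rightarrow> nat) \<Rightarrow> complex mat).
            (\<forall>n\<ge>1. is_rep n (d n) (\<rho> n)) \<and> eventually_polynomial d \<rho> \<longrightarrow>
            (\<exists>N. \<forall>n\<ge>N. \<not> sign_occurs n (d n) (\<rho> n)))
       \<and> (\<forall>lam n. is_partition lam \<and> n > sum_list lam + 1 \<longrightarrow> \<not> sign_occurs_in_weyl lam n)"
proof (intro conjI allI impI)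
  fix d :: "nat \<Rightarrow> nat" and \<rho> :: "nat \<Rightarrow> (nat \<Rightarrow> nat) \<Rightarrow> complex mat"
  assume h: "(\<forall>n\<ge>1. is_rep n (d n) (\<rho> n)) \<and> eventually_polynomial d \<rho>"
  then obtain p N where pN: "\<forall>n\<ge>N. \<forall>\<sigma>. \<sigma> permutes {..<n} \<longrightarrow>
        mat_trace (\<rho> n \<sigma>) = cpoly_eval p (cyc_count n \<sigma>)"
    unfolding eventually_polynomial_def by blast
  show "\<exists>N. \<forall>n\<ge>N. \<not> sign_occurs n (d n) (\<rho> n)"
  proof (intro exI allI impI)
    fix n assume n: "max N (WP p + 2) \<le> n"
    show "\<not> sign_occurs n (d n) (\<rho> n)"
    proof (rule no_sign_large)
      show "is_rep n (d n) (\<rho> n)" using h n by simp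
      show "mat_trace (\<rho> n \<sigma>) = cpoly_eval p (cyc_count n \<sigma>)" if "\<sigma> permutes {..<n}" for \<sigma>
        using pN n that by simp
      show "WP p + 2 \<le> n" using n by simp
    qed
  qed
next
  fix lam :: "nat list" and n :: nat
  assume "is_partition lam \<and> n > sum_list lam + 1"
  then show "\<not> sign_occurs_in_weyl lam n" using weyl_part by blast
qed

end
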